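(* Let $H$ be a graph and $(T,(V_t)_{t\in T})$ a rooted tree-decomposition of $H$ of finite adhesion. Suppose there is an edge $e=ts$ of $T$ with $t<_T s$ and a set $Y\subseteq V_e$ such that $(H\uparrow e)-Y$ has at least two components $C_1,C_2$ with $V(C_1)\cap V_e\neq\emptyset\neq V(C_2)\cap V_e$ and $V(C_2)\cap(V_s\setminus V_e)\neq\emptyset$. Then $(T,(V_t)_{t\in T})$ is not lean.
   Context: A tree-decomposition $(T,(V_t)_{t\in T})$ of $H$ consists of a tree $T$ and bags $V_t\subseteq V(H)$ covering all vertices and edges of $H$ such that for each vertex $v$ the nodes $t$ with $v\in V_t$ form a subtree. For an edge $e=st$ of $T$, $V_e:=V_s\cap V_t$ is its adhesion set; the decomposition has finite adhesion if all $V_e$ are finite. In a rooted tree-decomposition, $T$ has a root $r$ and $\le_T$ is the tree-order ($s\le_T t$ iff $s$ lies on the $r$–$t$ path in $T$). For an edge $e$ of $T$, $T_e$ is the component of $T-e$ not containing $r$, and $H\uparrow e$ is the subgraph of $H$ induced on $\bigcup_{u\in T_e}V_u$. The tree-decomposition is lean if for every two (not necessarily distinct) nodes $s,t$ and all $Z_s\subseteq V_s$, $Z_t\subseteq V_t$ with $|Z_s|=|Z_t|=:\ell\in\mathbb N$, either $H$ contains $\ell$ pairwise disjoint $Z_s$–$Z_t$ paths or some edge $e$ of the $s$–$t$ path in $T$ has $|V_e|<\ell$. *)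

theory Defs
  imports Main
begin

definition graph :: "'v set \<Rightarrow> ('v \<Rightarrow> 'v \<Rightarrow> bool) \<Rightarrow> bool" where
  "graph V E \<longleftrightarrow> (\<forall>x y. E x y \<longrightarrow> x \<in> V \<and> y \<in> V \<and> E y x \<and> x \<noteq> y)"

definition path_in :: "('v \<Rightarrow> 'v \<Rightarrow> bool) \<Rightarrow> 'v set \<Rightarrow> 'v list \<Rightarrow> bool" where
  "path_in E W xs \<longleftrightarrow> xs \<noteq> [] \<and> distinct xs \<and> set xs \<subseteq> W \<and>
     (\<forall>i. Suc i < length xs \<longrightarrow> E (xs ! i) (xs ! Suc i))"

definition reachable :: "('v \<Rightarrow> 'v \<Rightarrow> bool) \<Rightarrow> 'v set \<Rightarrow> 'v \<Rightarrow> 'v \<Rightarrow> bool" where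
  "reachable E W x y \<longleftrightarrow> (\<exists>xs. path_in E W xs \<and> hd xs = x \<and> last xs = y)"

definition connected_set :: "('v \<Rightarrow> 'v \<Rightarrow> bool) \<Rightarrow> 'v set \<Rightarrow> bool" where
  "connected_set E W \<longleftrightarrow> (\<forall>x\<in>W. \<forall>y\<in>W. reachable E W x y)"

definition component_of :: "('v \<Rightarrow> 'v \<Rightarrow> bool) \<Rightarrow> 'v set \<Rightarrow> 'v set \<Rightarrow> bool" where
  "component_of E W C \<longleftrightarrow> (\<exists>x\<in>W. C = {y. reachable E W x y})"

definition tree :: "'n set \<Rightarrow> ('n \<Rightarrow> 'n \<Rightarrow> bool) \<Rightarrow> bool" where
  "tree N F \<longleftrightarrow> graph N F \<and> N \<noteq> {} \<and> connected_set F N \<and>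
     \<not> (\<exists>xs. path_in F N xs \<and> 3 \<le> length xs \<and> F (last xs) (hd xs))"

definition tree_decomp ::
  "'v set \<Rightarrow> ('v \<Rightarrow> 'v \<Rightarrow> bool) \<Rightarrow> 'n set \<Rightarrow> ('n \<Rightarrow> 'n \<Rightarrow> bool) \<Rightarrow> ('n \<Rightarrow> 'v set) \<Rightarrow> bool" where
  "tree_decomp V E N F B \<longleftrightarrow> tree N F \<and> (\<forall>t\<in>N. B t \<subseteq> V) \<and>
     (\<forall>v\<in>V. \<exists>t\<in>N. v \<in> B t) \<and>
     (\<forall>x y. E x y \<longrightarrow> (\<exists>t\<in>N. x \<in> B t \<and> y \<in> B t)) \<and>
     (\<forall>v. connected_set F {t\<in>N. v \<in> B t})"

definition adhesion :: "('n \<Rightarrow> 'v set) \<Rightarrow> 'n \<Rightarrow> 'n \<Rightarrow> 'v set" where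
  "adhesion B s t = B s \<inter> B t"

definition finite_adhesion :: "('n \<Rightarrow> 'n \<Rightarrow> bool) \<Rightarrow> ('n \<Rightarrow> 'v set) \<Rightarrow> bool" where
  "finite_adhesion F B \<longleftrightarrow> (\<forall>s t. F s t \<longrightarrow> finite (adhesion B s t))"

definition tree_le :: "'n set \<Rightarrow> ('n \<Rightarrow> 'n \<Rightarrow> bool) \<Rightarrow> 'n \<Rightarrow> 'n \<Rightarrow> 'n \<Rightarrow> bool" where
  "tree_le N F r s t \<longleftrightarrow> (\<exists>P. path_in F N P \<and> hd P = r \<and> last P = t \<and> s \<in> set P)"

definition del_edge :: "('n \<Rightarrow> 'n \<Rightarrow> bool) \<Rightarrow> 'n \<Rightarrow> 'n \<Rightarrow> ('n \<Rightarrow> 'n \<Rightarrow> bool)" where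
  "del_edge F t s = (\<lambda>x y. F x y \<and> {x, y} \<noteq> {t, s})"

text \<open>T_e: the component of T - e not containing the root r.\<close>
definition up_nodes :: "'n set \<Rightarrow> ('n \<Rightarrow> 'n \<Rightarrow> bool) \<Rightarrow> 'n \<Rightarrow> 'n \<Rightarrow> 'n \<Rightarrow> 'n set" where
  "up_nodes N F r t s =
     (if reachable (del_edge F t s) N s r then {u. reachable (del_edge F t s) N t u}
      else {u. reachable (del_edge F t s) N s u})"

text \<open>Vertex set of H\<up>e (the subgraph of H induced on this set).\<close>
definition up_vertices ::
  "'n set \<Rightarrow> ('n \<Rightarrow> 'n \<Rightarrow> bool) \<Rightarrow> ('n \<Rightarrow> 'v set) \<Rightarrow> 'n \<Rightarrow> 'n \<Rightarrow> 'n \<Rightarrow> 'v set" where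
  "up_vertices N F B r t s = (\<Union>u\<in>up_nodes N F r t s. B u)"

definition disjoint_paths ::
  "'v set \<Rightarrow> ('v \<Rightarrow> 'v \<Rightarrow> bool) \<Rightarrow> 'v set \<Rightarrow> 'v set \<Rightarrow> nat \<Rightarrow> bool" where
  "disjoint_paths V E Zs Zt l \<longleftrightarrow> (\<exists>P :: nat \<Rightarrow> 'v list.
     (\<forall>i<l. path_in E V (P i) \<and> set (P i) \<inter> Zs = {hd (P i)} \<and> set (P i) \<inter> Zt = {last (P i)}) \<and>
     (\<forall>i<l. \<forall>j<l. i \<noteq> j \<longrightarrow> set (P i) \<inter> set (P j) = {}))"

definition lean ::
  "'v set \<Rightarrow> ('v \<Rightarrow> 'v \<Rightarrow> bool) \<Rightarrow> 'n set \<Rightarrow> ('n \<Rightarrow> 'n \<Rightarrow> bool) \<Rightarrow> ('n \<Rightarrow> 'v set) \<Rightarrow> bool" where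
  "lean V E N F B \<longleftrightarrow> (\<forall>s\<in>N. \<forall>t\<in>N. \<forall>Zs Zt l.
     Zs \<subseteq> B s \<longrightarrow> Zt \<subseteq> B t \<longrightarrow> finite Zs \<longrightarrow> finite Zt \<longrightarrow> card Zs = l \<longrightarrow> card Zt = l \<longrightarrow>
     disjoint_paths V E Zs Zt l \<or>
     (\<exists>P i. path_in F N P \<and> hd P = s \<and> last P = t \<and> Suc i < length P \<and>
        finite (adhesion B (P ! i) (P ! Suc i)) \<and> card (adhesion B (P ! i) (P ! Suc i)) < l))"

end

theory Submission
  imports Defs
begin

definition rel :: "('v \<Rightarrow> 'v \<Rightarrow> bool) \<Rightarrow> 'v set \<Rightarrow> 'v \<Rightarrow> 'v \<Rightarrow> bool" where
  "rel E W a b \<longleftrightarrow> E a b \<and> a \<in> W \<and> b \<in> W"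

lemma path_tl:
  assumes "path_in E W (a # b # ys)"
  shows "path_in E W (b # ys)" "E a b"
proof -
  have h: "\<forall>i. Suc i < length (a # b # ys) \<longrightarrow> E ((a # b # ys) ! i) ((a # b # ys) ! Suc i)"
    and d: "distinct (a # b # ys)" and st: "set (a # b # ys) \<subseteq> W"
    using assms unfolding path_in_def by blast+
  show "E a b" using h[rule_format, of 0] by simp
  have "\<forall>i. Suc i < length (b # ys) \<longrightarrow> E ((b # ys) ! i) ((b # ys) ! Suc i)"
  proof (intro allI impI)
    fix i assume "Suc i < length (b # ys)"
    then show "E ((b # ys) ! i) ((b # ys) ! Suc i)" using h[rule_format, of "Suc i"] by simp
  qed
  moreover have "distinct (b # ys)" using d by simp
  moreover have "set (b # ys) \<subseteq> W" using st by simp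
  ultimately show "path_in E W (b # ys)" unfolding path_in_def by simp
qed

lemma path_R:
  assumes "path_in E W xs"
  shows "(rel E W)\<^sup>*\<^sup>* (hd xs) (last xs)"
  using assms
proof (induction xs)
  case Nil then show ?case by (simp add: path_in_def)
next
  case (Cons a xs)
  show ?case
  proof (cases xs)
    case Nil then show ?thesis by simp
  next
    case (Cons b ys)
    have pp: "path_in E W (a # b # ys)" using Cons.prems Cons by simp
    have p: "path_in E W xs" "E a b" using path_tl[OF pp] Cons by simp_all
    have st: "set (a # xs) \<subseteq> W" using Cons.prems unfolding path_in_def by blast
    have "rel E W a b" using p(2) st Cons unfolding rel_def by simp
    moreover have "(rel E W)\<^sup>*\<^sup>* (hd xs) (last xs)" using Cons.IH p(1) .
    ultimately have "(rel E W)\<^sup>*\<^sup>* a (last xs)" using Cons by (metis converse_rtranclp_into_rtranclp list.sel(1))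
    then show ?thesis using Cons by simp
  qed
qed

lemma reach_in:
  assumes "reachable E W u v" shows "u \<in> W" "v \<in> W"
proof -
  obtain xs where "path_in E W xs" "hd xs = u" "last xs = v" using assms unfolding reachable_def by blast
  then show "u \<in> W" "v \<in> W" unfolding path_in_def by auto
qed

lemma R_reach:
  assumes "(rel E W)\<^sup>*\<^sup>* x y" "x \<in> W"
  shows "reachable E W x y"
  using assms(1)
proof (induction rule: rtranclp_induct)
  case base
  have "path_in E W [x]" using assms(2) by (simp add: path_in_def)
  then show ?case unfolding reachable_def by force
next
  case (step y z)
  obtain xs where xs: "path_in E W xs" "hd xs = x" "last xs = y"
    using step.IH unfolding reachable_def by blast
  show ?case
  proof (cases "z \<in> set xs")
    case True
    then obtain i where i: "i < length xs" "xs ! i = z" by (meson in_set_conv_nth)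
    let ?ys = "take (Suc i) xs"
    have "path_in E W ?ys"
      using xs(1) i unfolding path_in_def
      by (auto simp: set_take_subset[THEN subset_trans] dest: in_set_takeD)
    moreover have "hd ?ys = x" using xs i by (simp add: hd_take)
    moreover have "last ?ys = z" using i by (simp add: take_Suc_conv_app_nth)
    ultimately show ?thesis unfolding reachable_def by blast
  next
    case False
    let ?ys = "xs @ [z]"
    have ne: "xs \<noteq> []" using xs unfolding path_in_def by auto
    have ex: "E (last xs) z" using step.hyps(2) xs unfolding rel_def by simp
    have "path_in E W ?ys" unfolding path_in_def
    proof (intro conjI allI impI)
      fix j assume j: "Suc j < length ?ys"
      show "E (?ys ! j) (?ys ! Suc j)"
      proof (cases "Suc j < length xs")
        case True then show ?thesis using xs(1) unfolding path_in_def by (simp add: nth_append)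
      next
        case False
        then have "j = length xs - 1" "Suc j = length xs" using j by auto
        then show ?thesis using ex ne by (simp add: nth_append last_conv_nth)
      qed
    qed (use xs False step.hyps(2) in \<open>auto simp: path_in_def rel_def\<close>)
    moreover have "hd ?ys = x" using xs ne by simp
    ultimately show ?thesis unfolding reachable_def by force
  qed
qed

lemma reach_iff:
  assumes "x \<in> W" shows "reachable E W x y \<longleftrightarrow> (rel E W)\<^sup>*\<^sup>* x y"
  using R_reach assms path_R unfolding reachable_def by metis

lemma rel_sym_rt:
  assumes "graph V E" "(rel E W)\<^sup>*\<^sup>* x y" shows "(rel E W)\<^sup>*\<^sup>* y x"
proof -
  have "(rel E W)\<inverse>\<inverse> = rel E W" using assms(1) unfolding graph_def rel_def by (auto simp: fun_eq_iff)
  then show ?thesis using assms(2) rtranclp_converseI by metis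
qed

lemma up_closed:
  assumes "a \<in> up_nodes N F r t s" "F a b" "b \<in> N" "{a,b} \<noteq> {t,s}"
  shows "b \<in> up_nodes N F r t s"
proof -
  obtain z where z: "up_nodes N F r t s = {u. reachable (del_edge F t s) N z u}"
    unfolding up_nodes_def by (cases "reachable (del_edge F t s) N s r") auto
  have ra: "reachable (del_edge F t s) N z a" using z assms(1) by auto
  have zN: "z \<in> N" "a \<in> N" using reach_in[OF ra] by auto
  have "(rel (del_edge F t s) N)\<^sup>*\<^sup>* z a" using ra reach_iff zN by metis
  moreover have "rel (del_edge F t s) N a b" using assms zN unfolding rel_def del_edge_def by auto
  ultimately have "(rel (del_edge F t s) N)\<^sup>*\<^sup>* z b" by (simp add: rtranclp.rtrancl_into_rtrancl)
  then have "reachable (del_edge F t s) N z b" using reach_iff zN by metis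
  then show ?thesis using z by simp
qed

lemma sep:
  assumes td: "tree_decomp V E N F B" and e: "E u v"
    and u: "u \<in> up_vertices N F B r t s" "u \<notin> adhesion B t s"
  shows "v \<in> up_vertices N F B r t s"
proof -
  let ?U = "up_nodes N F r t s"
  obtain a where a: "a \<in> ?U" "u \<in> B a" using u unfolding up_vertices_def by auto
  have "\<exists>w\<in>N. u \<in> B w \<and> v \<in> B w" using td e unfolding tree_decomp_def by simp
  then obtain w where w: "w \<in> N" "u \<in> B w" "v \<in> B w" by blast
  obtain z where z: "?U = {u. reachable (del_edge F t s) N z u}"
    unfolding up_nodes_def by (cases "reachable (del_edge F t s) N s r") auto
  have aN: "a \<in> N" using a(1) z reach_in(2)[of "del_edge F t s" N z a] by simp
  let ?S = "{x\<in>N. u \<in> B x}"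
  have "connected_set F ?S" using td unfolding tree_decomp_def by simp
  moreover have "a \<in> ?S" "w \<in> ?S" using a aN w by simp_all
  ultimately have "reachable F ?S a w" unfolding connected_set_def by simp
  then have "(rel F ?S)\<^sup>*\<^sup>* a w" using reach_iff[OF \<open>a \<in> ?S\<close>] by simp
  then have "w \<in> ?U"
  proof (induction rule: rtranclp_induct)
    case base then show ?case using a by simp
  next
    case (step c d)
    have cd: "F c d" "c \<in> N" "d \<in> N" "u \<in> B c" "u \<in> B d" using step.hyps(2) unfolding rel_def by simp_all
    show ?case
    proof (cases "{c,d} = {t,s}")
      case True
      then have "(c = t \<and> d = s) \<or> (c = s \<and> d = t)" by (simp add: doubleton_eq_iff)
      then have "u \<in> B t" "u \<in> B s" using cd by auto
      then show ?thesis using u(2) unfolding adhesion_def by simp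
    next
      case False
      show ?thesis by (rule up_closed[OF step.IH cd(1) cd(3) False])
    qed
  qed
  then show ?thesis using w unfolding up_vertices_def by blast
qed

lemma path_stays:
  assumes "xs \<noteq> []" "hd xs \<in> W" "\<forall>j. Suc j < length xs \<longrightarrow> xs!j \<in> W \<longrightarrow> xs!Suc j \<in> W"
  shows "set xs \<subseteq> W"
proof -
  have "\<forall>j. j < length xs \<longrightarrow> xs ! j \<in> W"
  proof
    fix j show "j < length xs \<longrightarrow> xs ! j \<in> W"
    proof (induction j)
      case 0 then show ?case using assms(1,2) by (simp add: hd_conv_nth)
    next
      case (Suc j) then show ?case using assms(3) by (meson Suc_lessD)
    qed
  qed
  then show ?thesis by (metis in_set_conv_nth subsetI)
qed

theorem lemma3p4:
  fixes V :: "'v set" and E :: "'v \<Rightarrow> 'v \<Rightarrow> bool"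
    and N :: "'n set" and F :: "'n \<Rightarrow> 'n \<Rightarrow> bool" and B :: "'n \<Rightarrow> 'v set"
    and r t s :: 'n and Y C1 C2 :: "'v set"
  assumes "graph V E"
    and "tree_decomp V E N F B"
    and "r \<in> N"
    and "finite_adhesion F B"
    and "F t s"
    and "tree_le N F r t s" and "t \<noteq> s"
    and "Y \<subseteq> adhesion B t s"
    and "component_of E (up_vertices N F B r t s - Y) C1"
    and "component_of E (up_vertices N F B r t s - Y) C2"
    and "C1 \<noteq> C2"
    and "C1 \<inter> adhesion B t s \<noteq> {}"
    and "C2 \<inter> adhesion B t s \<noteq> {}"
    and "C2 \<inter> (B s - adhesion B t s) \<noteq> {}"
  shows "\<not> lean V E N F B"
proof
  assume lean: "lean V E N F B"
  let ?Ve = "adhesion B t s"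
  let ?U = "up_vertices N F B r t s"
  let ?W = "?U - Y"
  have fin: "finite ?Ve" using assms(4,5) unfolding finite_adhesion_def by blast
  obtain x where x: "x \<in> C2" "x \<in> B s" "x \<notin> ?Ve" using assms(14) by blast
  obtain y where y: "y \<in> C1" "y \<in> ?Ve" using assms(12) by blast
  obtain a where a: "a \<in> ?W" "C1 = {v. reachable E ?W a v}"
    using assms(9) unfolding component_of_def by blast
  obtain b where b: "b \<in> ?W" "C2 = {v. reachable E ?W b v}"
    using assms(10) unfolding component_of_def by blast
  have xW: "x \<in> ?W" using reach_in(2)[of E ?W b x] x b by simp
  have yW: "y \<in> ?W" using reach_in(2)[of E ?W a y] y a by simp
  define Zs where "Zs = insert x (?Ve - {y})"
  have finZ: "finite Zs" using fin unfolding Zs_def by simp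
  have cardZs: "card Zs = card ?Ve"
  proof -
    have "card ?Ve > 0" using fin y(2) card_gt_0_iff by blast
    moreover have "x \<notin> ?Ve - {y}" using x by simp
    ultimately show ?thesis using fin y(2) by (simp add: card_Diff_singleton Zs_def)
  qed
  have "graph N F" using assms(2) unfolding tree_decomp_def tree_def by simp
  then have sN: "s \<in> N" using assms(5) unfolding graph_def by blast
  have ZsB: "Zs \<subseteq> B s" "?Ve \<subseteq> B s" using x unfolding Zs_def adhesion_def by auto
  have noP: "\<not> (\<exists>P i. path_in F N P \<and> hd P = s \<and> last P = s \<and> Suc i < length P \<and>
        finite (adhesion B (P ! i) (P ! Suc i)) \<and> card (adhesion B (P ! i) (P ! Suc i)) < card ?Ve)"
  proof
    assume "\<exists>P i. path_in F N P \<and> hd P = s \<and> last P = s \<and> Suc i < length P \<and>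
        finite (adhesion B (P ! i) (P ! Suc i)) \<and> card (adhesion B (P ! i) (P ! Suc i)) < card ?Ve"
    then obtain P i where P: "path_in F N P" "hd P = s" "last P = s" "Suc i < length P" by blast
    have "P ! 0 = P ! (length P - 1)" using P by (simp add: hd_conv_nth last_conv_nth path_in_def)
    moreover have "distinct P" using P unfolding path_in_def by simp
    ultimately show False using P(4) nth_eq_iff_index_eq by fastforce
  qed
  have "disjoint_paths V E Zs ?Ve (card ?Ve)"
    using lean[unfolded lean_def, rule_format, OF sN sN ZsB(1) ZsB(2) finZ fin cardZs refl] noP by argo
  then obtain P where P1: "\<forall>i<card ?Ve. path_in E V (P i) \<and> set (P i) \<inter> Zs = {hd (P i)} \<and> set (P i) \<inter> ?Ve = {last (P i)}"
    and P2: "\<forall>i<card ?Ve. \<forall>j<card ?Ve. i \<noteq> j \<longrightarrow> set (P i) \<inter> set (P j) = {}"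
    unfolding disjoint_paths_def by blast
  have hdP: "hd (P i) \<in> set (P i) \<and> hd (P i) \<in> Zs" if "i < card ?Ve" for i
  proof -
    have "set (P i) \<inter> Zs = {hd (P i)}" using P1 that by blast
    then show ?thesis by blast
  qed
  have "inj_on (\<lambda>i. hd (P i)) {..<card ?Ve}"
  proof (rule inj_onI)
    fix i j assume ij: "i \<in> {..<card ?Ve}" "j \<in> {..<card ?Ve}" "hd (P i) = hd (P j)"
    show "i = j"
    proof (rule ccontr)
      assume "i \<noteq> j"
      then have "set (P i) \<inter> set (P j) = {}" using P2 ij by simp
      moreover have "hd (P i) \<in> set (P i)" using hdP ij(1) by simp
      moreover have "hd (P j) \<in> set (P j)" using hdP ij(2) by simp
      ultimately show False using ij(3) by auto
    qed
  qed
  then have c: "card ((\<lambda>i. hd (P i)) ` {..<card ?Ve}) = card Zs" using cardZs by (simp add: card_image)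
  have "(\<lambda>i. hd (P i)) ` {..<card ?Ve} \<subseteq> Zs" using hdP by auto
  then have "(\<lambda>i. hd (P i)) ` {..<card ?Ve} = Zs" using c finZ card_subset_eq by blast
  moreover have "x \<in> Zs" unfolding Zs_def by simp
  ultimately obtain i where i: "i < card ?Ve" "hd (P i) = x" by (metis imageE lessThan_iff)
  let ?xs = "P i"
  have p0: "path_in E V ?xs \<and> set ?xs \<inter> Zs = {hd ?xs} \<and> set ?xs \<inter> ?Ve = {last ?xs}"
    using P1 i(1) by blast
  have p: "path_in E V ?xs" "set ?xs \<inter> Zs = {x}" "set ?xs \<inter> ?Ve = {last ?xs}"
    using p0 i(2) by simp_all
  have ne: "?xs \<noteq> []" using p unfolding path_in_def by simp
  have ly: "last ?xs = y"
  proof (rule ccontr)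
    assume "last ?xs \<noteq> y"
    moreover have "last ?xs \<in> ?Ve" "last ?xs \<in> set ?xs" using p ne by auto
    ultimately have "last ?xs \<in> Zs" unfolding Zs_def by auto
    then have "last ?xs = x" using p ne by auto
    then show False using x \<open>last ?xs \<in> ?Ve\<close> by simp
  qed
  have sub: "set ?xs \<inter> ?Ve \<subseteq> {y}" using p ly by auto
  have yY: "y \<notin> Y" using yW by simp
  have dist: "distinct ?xs" using p unfolding path_in_def by simp
  have "set ?xs \<subseteq> ?W"
  proof (rule path_stays[OF ne])
    show "hd ?xs \<in> ?W" using i xW by simp
    show "\<forall>j. Suc j < length ?xs \<longrightarrow> ?xs!j \<in> ?W \<longrightarrow> ?xs!Suc j \<in> ?W"
    proof (intro allI impI)
      fix j assume j: "Suc j < length ?xs" "?xs!j \<in> ?W"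
      have "?xs ! j \<noteq> y"
      proof
        assume "?xs ! j = y"
        then have "?xs ! j = ?xs ! (length ?xs - 1)" using ly ne by (simp add: last_conv_nth)
        then show False using dist j(1) nth_eq_iff_index_eq by fastforce
      qed
      moreover have "?xs ! j \<in> set ?xs" using j(1) by simp
      ultimately have "?xs ! j \<notin> ?Ve" using sub by blast
      moreover have "E (?xs ! j) (?xs ! Suc j)" using p j unfolding path_in_def by blast
      moreover have "?xs ! j \<in> ?U" using j(2) by simp
      ultimately have "?xs ! Suc j \<in> ?U" using sep[OF assms(2)] by blast
      moreover have "?xs ! Suc j \<in> set ?xs" using j(1) by simp
      then have "?xs ! Suc j \<notin> Y"
        using sub yY assms(8) by blast
      ultimately show "?xs ! Suc j \<in> ?W" by simp
    qed
  qed
  then have "path_in E ?W ?xs" using p unfolding path_in_def by blast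
  then have "(rel E ?W)\<^sup>*\<^sup>* (hd ?xs) (last ?xs)" by (rule path_R)
  then have xy: "(rel E ?W)\<^sup>*\<^sup>* x y" using i(2) ly by simp
  have "reachable E ?W b x" using x b by simp
  then have bx: "(rel E ?W)\<^sup>*\<^sup>* b x" using reach_iff[OF b(1)] by simp
  have "reachable E ?W a y" using y a by simp
  then have ay: "(rel E ?W)\<^sup>*\<^sup>* a y" using reach_iff[OF a(1)] by simp
  have yx: "(rel E ?W)\<^sup>*\<^sup>* y x" using rel_sym_rt[OF assms(1) xy] .
  have ab: "(rel E ?W)\<^sup>*\<^sup>* a b"
    using rtranclp_trans[OF rtranclp_trans[OF ay yx] rel_sym_rt[OF assms(1) bx]] .
  have ba: "(rel E ?W)\<^sup>*\<^sup>* b a" using rel_sym_rt[OF assms(1) ab] .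
  have "C1 = C2"
  proof -
    have "(rel E ?W)\<^sup>*\<^sup>* a v \<longleftrightarrow> (rel E ?W)\<^sup>*\<^sup>* b v" for v
      using rtranclp_trans[OF ab, of v] rtranclp_trans[OF ba, of v] by blast
    moreover have "C1 = {v. (rel E ?W)\<^sup>*\<^sup>* a v}" using a reach_iff[OF a(1)] by simp
    moreover have "C2 = {v. (rel E ?W)\<^sup>*\<^sup>* b v}" using b reach_iff[OF b(1)] by simp
    ultimately show ?thesis by simp
  qed
  then show False using assms(11) by simp
qed

end
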